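(* $\Omega(\log\log n)$ bits of advice are required for a deterministic online algorithm to achieve an asymptotic approximation ratio greater than $1/2$ for online one-sided bipartite matching, even when the algorithm is given $n$ in advance. More precisely, no online algorithm using $\log\log n-\log\log\log n$ bits of advice (and knowing $n$) achieves an asymptotic approximation ratio greater than $1/2$.
   Context: Online one-sided bipartite matching: offline vertices are known in advance; $n$ online vertices arrive one at a time in adversarial order, each with its set of offline neighbours, and must be irrevocably matched to an unmatched neighbour or left unmatched; the goal is a maximum-size matching. An online algorithm with $b$ bits of advice may read a binary advice string of length $b$ written before the input is processed by an oracle that knows the whole input and has unbounded computational power. The asymptotic approximation ratio of $\mathbb{A}$ is $\liminf_{n}\inf_{I\in\mathcal{I}_n} v(\mathbb{A},I)/v(I)$, with $v(I)$ the maximum matching size. *)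

theory Defs
  imports Complex_Main "HOL-Library.Extended_Real" "HOL-Library.Liminf_Limsup"
begin

text \<open>Instances: a finite set U of offline vertices (natural numbers) and a list G of
  neighbour sets; G ! i is the neighbourhood of the i-th arriving online vertex.
  The list order is the (adversarial) arrival order; n = length G.\<close>

definition valid_instance :: "nat set \<Rightarrow> nat set list \<Rightarrow> bool" where
  "valid_instance U G \<longleftrightarrow> finite U \<and> (\<forall>x \<in> set G. x \<subseteq> U)"

definition is_matching :: "nat set \<Rightarrow> nat set list \<Rightarrow> (nat \<times> nat) set \<Rightarrow> bool" where
  "is_matching U G M \<longleftrightarrow>
     M \<subseteq> {..<length G} \<times> U \<and>
     (\<forall>(i,u) \<in> M. u \<in> G ! i) \<and>
     (\<forall>(i,u) \<in> M. \<forall>(j,w) \<in> M. (i = j \<longleftrightarrow> u = w))"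

definition opt :: "nat set \<Rightarrow> nat set list \<Rightarrow> nat" where
  "opt U G = Max (card ` {M. is_matching U G M})"

text \<open>A deterministic online algorithm with advice, knowing n in advance:
  A n advice U prefix x  is its decision for the current online vertex with neighbour
  set x, given n, the advice string, the offline vertex set U and the neighbour sets of
  the previously arrived online vertices (its own earlier decisions are determined by
  these). Some u = match to u, None = leave unmatched. An invalid choice (not an
  unmatched neighbour) is treated as leaving the vertex unmatched.\<close>
type_synonym online_alg = "nat \<Rightarrow> bool list \<Rightarrow> nat set \<Rightarrow> nat set list \<Rightarrow> nat set \<Rightarrow> nat option"

definition alg_step :: "online_alg \<Rightarrow> nat \<Rightarrow> bool list \<Rightarrow> nat set
    \<Rightarrow> nat set list \<times> nat set \<Rightarrow> nat set \<Rightarrow> nat set list \<times> nat set" where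
  "alg_step A n adv U st x =
     (case A n adv U (fst st) x of
        Some u \<Rightarrow> if u \<in> x \<and> u \<in> U \<and> u \<notin> snd st
                  then (fst st @ [x], insert u (snd st)) else (fst st @ [x], snd st)
      | None \<Rightarrow> (fst st @ [x], snd st))"

definition alg_value :: "online_alg \<Rightarrow> bool list \<Rightarrow> nat set \<Rightarrow> nat set list \<Rightarrow> nat" where
  "alg_value A adv U G = card (snd (foldl (alg_step A (length G) adv U) ([], {}) G))"

definition advice_bits :: "nat \<Rightarrow> nat" where
  "advice_bits n = nat \<lfloor>log 2 (log 2 (real n)) - log 2 (log 2 (log 2 (real n)))\<rfloor>"

definition asymp_ratio :: "online_alg \<Rightarrow> (nat set \<Rightarrow> nat set list \<Rightarrow> bool list) \<Rightarrow> ereal" where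
  "asymp_ratio A adv_of =
     liminf (\<lambda>n. INF I \<in> {(U, G). valid_instance U G \<and> length G = n \<and> opt U G > 0}.
        ereal (real (alg_value A (adv_of (fst I) (snd I)) (fst I) (snd I)) / real (opt (fst I) (snd I))))"

end

theory Submission
  imports Defs "HOL-Real_Asymp.Real_Asymp"
begin


lemma fst_foldl_alg: "fst (foldl (alg_step A n adv U) st G) = fst st @ G"
  by (induction G arbitrary: st) (auto simp: alg_step_def split: option.splits)

definition mt :: "online_alg \<Rightarrow> nat \<Rightarrow> bool list \<Rightarrow> nat set \<Rightarrow> nat set list \<Rightarrow> nat set" where
  "mt A n adv U G = snd (foldl (alg_step A n adv U) ([], {}) G)"

lemma mt_snoc: "mt A n adv U (G @ [Z]) =
  (case A n adv U G Z of Some w \<Rightarrow> if w \<in> Z \<and> w \<in> U \<and> w \<notin> mt A n adv U G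
        then insert w (mt A n adv U G) else mt A n adv U G
   | None \<Rightarrow> mt A n adv U G)"
proof -
  define st where "st = foldl (alg_step A n adv U) ([], {}) G"
  have f: "fst st = G" using fst_foldl_alg[of A n adv U "([],{})" G] by (simp add: st_def)
  have s: "snd st = mt A n adv U G" by (simp add: mt_def st_def)
  have "mt A n adv U (G @ [Z]) = snd (alg_step A n adv U st Z)" by (simp add: mt_def st_def)
  also have "\<dots> = (case A n adv U G Z of Some w \<Rightarrow> if w \<in> Z \<and> w \<in> U \<and> w \<notin> snd st
        then insert w (snd st) else snd st | None \<Rightarrow> snd st)"
    by (simp add: alg_step_def f split: option.splits)
  finally show ?thesis unfolding s by simp
qed

lemma mt_cases: "mt A n adv U (G @ [Z]) = mt A n adv U G \<or>
   (\<exists>w\<in>Z. w \<notin> mt A n adv U G \<and> mt A n adv U (G @ [Z]) = insert w (mt A n adv U G))"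
  unfolding mt_snoc by (auto split: option.splits)

lemma mt_sub: "mt A n adv U G \<subseteq> U"
proof (induction G rule: rev_induct)
  case Nil then show ?case by (simp add: mt_def)
next
  case (snoc x xs) then show ?case by (auto simp: mt_snoc split: option.splits)
qed

lemma pot1:
  assumes "finite N" "finite M" "u \<in> N" "M' = M \<or> (\<exists>w\<in>N. w \<notin> M \<and> M' = insert w M)"
  shows "2*card M' + card ((N - {u}) - M') \<le> 2*card M + card (N - M) + 1"
  using assms(4)
proof
  assume "M' = M"
  then show ?thesis using assms by (simp, intro le_SucI card_mono) auto
next
  assume "\<exists>w\<in>N. w \<notin> M \<and> M' = insert w M"
  then obtain w where w: "w \<in> N" "w \<notin> M" "M' = insert w M" by blast
  have c1: "card M' = card M + 1" using w assms by simp
  have "(N - {u}) - M' \<subseteq> (N - M) - {w}" using w by auto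
  hence "card ((N - {u}) - M') \<le> card ((N - M) - {w})" using assms by (simp add: card_mono)
  also have "\<dots> = card (N - M) - 1" using w by simp
  finally have a: "card ((N - {u}) - M') \<le> card (N - M) - 1" .
  have "card (N - M) \<ge> 1" using w assms
    by (metis DiffI One_nat_def Suc_leI card_gt_0_iff empty_iff finite_Diff)
  then show ?thesis using a c1 by linarith
qed

lemma pot2:
  assumes "finite N" "finite M" "u \<in> N" "M' = M \<or> (\<exists>w\<in>N. w \<notin> M \<and> M' = insert w M)"
    "M' \<noteq> M \<longrightarrow> u \<notin> M'"
  shows "2*card M' + card ((N - {u}) - M') \<le> 2*card M + card (N - M)"
  using assms(4)
proof
  assume "M' = M"
  then show ?thesis using assms by (simp add: card_mono Diff_mono)
next
  assume "\<exists>w\<in>N. w \<notin> M \<and> M' = insert w M"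
  then obtain w where w: "w \<in> N" "w \<notin> M" "M' = insert w M" by blast
  then have "M' \<noteq> M" by auto
  then have u: "u \<notin> M'" using assms by auto
  have c1: "card M' = card M + 1" using w assms by simp
  have e: "(N - {u}) - M' = ((N - M) - {w}) - {u}" using w by auto
  have f: "finite (N - M)" using assms by simp
  have c2: "card ((N - M) - {w}) = card (N - M) - 1" using w by simp
  have uu: "u \<in> (N - M) - {w}" using u w assms by auto
  have c3: "card (((N - M) - {w}) - {u}) = card ((N - M) - {w}) - 1" using uu by simp
  have p: "card ((N - M) - {w}) \<ge> 1" using uu f
    by (metis One_nat_def Suc_leI card_gt_0_iff empty_iff finite_Diff)
  then show ?thesis using c1 c2 c3 e by simp
qed



lemma stuck_bound:
  assumes fI: "finite I" and fN: "finite N"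
    and h: "\<forall>\<sigma>\<subseteq>I. card {v\<in>N. \<forall>i\<in>I. v \<in> M i \<longleftrightarrow> i \<in> \<sigma>} \<le> card (I - \<sigma>)"
  shows "card N \<le> card I * 2 ^ card I"
proof -
  let ?C = "\<lambda>\<sigma>. {v\<in>N. \<forall>i\<in>I. v \<in> M i \<longleftrightarrow> i \<in> \<sigma>}"
  have "N \<subseteq> (\<Union>\<sigma>\<in>Pow I. ?C \<sigma>)"
  proof
    fix v assume "v \<in> N"
    then have "v \<in> ?C {i\<in>I. v \<in> M i}" by simp
    then show "v \<in> (\<Union>\<sigma>\<in>Pow I. ?C \<sigma>)" by (intro UN_I[of "{i\<in>I. v \<in> M i}"]) auto
  qed
  then have "card N \<le> card (\<Union>\<sigma>\<in>Pow I. ?C \<sigma>)"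
    by (intro card_mono finite_UN_I) (use fI fN in auto)
  also have "\<dots> \<le> (\<Sum>\<sigma>\<in>Pow I. card (?C \<sigma>))" by (rule card_UN_le) (use fI in simp)
  also have "\<dots> \<le> (\<Sum>\<sigma>\<in>Pow I. card I)"
  proof (rule sum_mono)
    fix \<sigma> assume "\<sigma> \<in> Pow I"
    then have "card (?C \<sigma>) \<le> card (I - \<sigma>)" using h[rule_format, of \<sigma>] by simp
    also have "\<dots> \<le> card I" using fI by (simp add: card_mono)
    finally show "card (?C \<sigma>) \<le> card I" .
  qed
  also have "\<dots> = card I * 2 ^ card I" using fI by (simp add: card_Pow)
  finally show ?thesis .
qed

lemma construct:
  fixes A :: online_alg and n :: nat and I :: "bool list set"
  assumes fI: "finite I"
  defines "U \<equiv> {..<n}" and "K \<equiv> card I * 2 ^ card I"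
  shows "t \<le> n \<Longrightarrow> \<exists>G us. length G = t \<and> length us = t \<and> distinct us \<and> set us \<subseteq> U \<and>
     (\<forall>j<t. us!j \<in> G!j) \<and> (\<forall>Z\<in>set G. Z \<subseteq> U) \<and>
     (\<forall>i\<in>I. 2*card (mt A n i U G) + card ((U - set us) - mt A n i U G) + min (card (U - set us)) K \<le> n + K)"
proof (induction t)
  case 0
  have m0: "mt A n i U [] = {}" for i by (simp add: mt_def)
  have cU: "card U = n" by (simp add: U_def)
  show ?case
    by (rule exI[of _ "[]"], rule exI[of _ "[]"]) (simp add: m0 cU)
next
  case (Suc t)
  then obtain G us where len: "length G = t" "length us = t" and dist: "distinct us"
    and sus: "set us \<subseteq> U" and edge: "\<forall>j<t. us!j \<in> G!j" and GU: "\<forall>Z\<in>set G. Z \<subseteq> U"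
    and inv: "\<forall>i\<in>I. 2*card (mt A n i U G) + card ((U - set us) - mt A n i U G) + min (card (U - set us)) K \<le> n + K"
    by auto
  define N where "N = U - set us"
  have fU: "finite U" by (simp add: U_def)
  have fN: "finite N" using fU by (simp add: N_def)
  have cN: "card N = n - t" using dist len sus by (simp add: N_def card_Diff_subset U_def distinct_card)
  hence Nne: "N \<noteq> {}" using Suc.prems by auto
  have NU: "N \<subseteq> U" by (auto simp: N_def)
  let ?M = "\<lambda>i. mt A n i U G"
  let ?C = "\<lambda>\<sigma>. {v\<in>N. \<forall>i\<in>I. v \<in> ?M i \<longleftrightarrow> i \<in> \<sigma>}"
  have fM: "finite (?M i)" for i by (rule finite_subset[OF mt_sub fU])
  have ext: "\<exists>G us. length G = Suc t \<and> length us = Suc t \<and> distinct us \<and> set us \<subseteq> U \<and>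
     (\<forall>j<Suc t. us!j \<in> G!j) \<and> (\<forall>Z\<in>set G. Z \<subseteq> U) \<and>
     (\<forall>i\<in>I. 2*card (mt A n i U G) + card ((U - set us) - mt A n i U G) + min (card (U - set us)) K \<le> n + K)"
    if Z: "Z \<subseteq> N" "u \<in> Z"
      and pot: "\<forall>i\<in>I. 2*card (mt A n i U (G@[Z])) + card ((N - {u}) - mt A n i U (G@[Z])) + min (card (N - {u})) K
                    \<le> 2*card (?M i) + card (N - ?M i) + min (card N) K" for Z u
  proof (intro exI conjI)
    show "length (G@[Z]) = Suc t" "length (us@[u]) = Suc t" using len by auto
    have uN: "u \<in> N" using Z by auto
    show "distinct (us@[u])" using dist uN by (auto simp: N_def)
    show "set (us@[u]) \<subseteq> U" using sus uN NU by auto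
    show "\<forall>j<Suc t. (us@[u])!j \<in> (G@[Z])!j" using edge len Z
      by (auto simp: nth_append less_Suc_eq)
    show "\<forall>Z'\<in>set (G@[Z]). Z' \<subseteq> U" using GU Z NU by auto
    have e: "U - set (us@[u]) = N - {u}" by (auto simp: N_def)
    show "\<forall>i\<in>I. 2*card (mt A n i U (G@[Z])) + card ((U - set (us@[u])) - mt A n i U (G@[Z]))
             + min (card (U - set (us@[u]))) K \<le> n + K"
      unfolding e using pot inv unfolding N_def by fastforce
  qed
  show ?case
  proof (cases "\<exists>\<sigma>\<subseteq>I. card (?C \<sigma>) > card (I - \<sigma>)")
    case True
    then obtain \<sigma> where s: "\<sigma> \<subseteq> I" "card (?C \<sigma>) > card (I - \<sigma>)" by blast
    define Z where "Z = ?C \<sigma>"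
    define W where "W = (\<Union>i\<in>I - \<sigma>. mt A n i U (G@[Z]) - ?M i)"
    have ZN: "Z \<subseteq> N" by (auto simp: Z_def)
    have W1: "card (mt A n i U (G@[Z]) - ?M i) \<le> 1" for i
      using mt_cases[of A n i U G Z] by (auto simp: insert_Diff_if)
    have "card W \<le> (\<Sum>i\<in>I - \<sigma>. card (mt A n i U (G@[Z]) - ?M i))"
      unfolding W_def by (rule card_UN_le) (use fI in simp)
    also have "\<dots> \<le> (\<Sum>i\<in>I - \<sigma>. 1)" by (rule sum_mono) (use W1 in auto)
    also have "\<dots> = card (I - \<sigma>)" by simp
    finally have "card W < card Z" using s by (simp add: Z_def)
    have fW: "finite W" unfolding W_def
      by (intro finite_UN_I) (use fI in simp, intro finite_Diff finite_subset[OF mt_sub fU])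
    then have "\<not> Z \<subseteq> W" using \<open>card W < card Z\<close> by (meson card_mono leD)
    then obtain u where u: "u \<in> Z" "u \<notin> W" by blast
    show ?thesis
    proof (rule ext[OF ZN u(1)], intro ballI)
      fix i assume iI: "i \<in> I"
      let ?M' = "mt A n i U (G@[Z])"
      have form: "?M' = ?M i \<or> (\<exists>w\<in>N. w \<notin> ?M i \<and> ?M' = insert w (?M i))"
        using mt_cases[of A n i U G Z] ZN by blast
      have cond: "?M' \<noteq> ?M i \<longrightarrow> u \<notin> ?M'"
      proof
        assume ne: "?M' \<noteq> ?M i"
        have "i \<notin> \<sigma>"
        proof
          assume "i \<in> \<sigma>"
          then have "Z \<subseteq> ?M i" using iI by (auto simp: Z_def)
          then show False using form ne ZN mt_cases[of A n i U G Z] by blast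
        qed
        then have "u \<notin> ?M i" using u iI by (auto simp: Z_def)
        moreover have "u \<notin> ?M' - ?M i" using u iI \<open>i \<notin> \<sigma>\<close> by (auto simp: W_def)
        ultimately show "u \<notin> ?M'" by blast
      qed
      have "2*card ?M' + card ((N - {u}) - ?M') \<le> 2*card (?M i) + card (N - ?M i)"
        by (rule pot2[OF fN fM]) (use u ZN form cond in auto)
      moreover have "min (card (N - {u})) K \<le> min (card N) K"
        using fN by (simp add: card_mono min.coboundedI1 min_le_iff_disj)
      ultimately show "2*card ?M' + card ((N - {u}) - ?M') + min (card (N - {u})) K
                    \<le> 2*card (?M i) + card (N - ?M i) + min (card N) K" by linarith
    qed
  next
    case False
    then have "card N \<le> K" unfolding K_def
      by (intro stuck_bound[OF fI fN]) (auto simp: not_less)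
    obtain u where uN: "u \<in> N" using Nne by blast
    show ?thesis
    proof (rule ext[of "{u}" u], use uN in simp, use uN in simp, intro ballI)
      fix i assume iI: "i \<in> I"
      let ?M' = "mt A n i U (G@[{u}])"
      have form: "?M' = ?M i \<or> (\<exists>w\<in>N. w \<notin> ?M i \<and> ?M' = insert w (?M i))"
        using mt_cases[of A n i U G "{u}"] uN by blast
      have "2*card ?M' + card ((N - {u}) - ?M') \<le> 2*card (?M i) + card (N - ?M i) + 1"
        by (rule pot1[OF fN fM uN form])
      moreover have "min (card (N - {u})) K + 1 = min (card N) K"
        using fN uN \<open>card N \<le> K\<close> Nne
        by (simp add: card_gt_0_iff)
      ultimately show "2*card ?M' + card ((N - {u}) - ?M') + min (card (N - {u})) K
                    \<le> 2*card (?M i) + card (N - ?M i) + min (card N) K" by linarith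
    qed
  qed
qed



lemma opt_ge:
  assumes "finite U" "is_matching U G M"
  shows "card M \<le> opt U G"
proof -
  have "{M. is_matching U G M} \<subseteq> Pow ({..<length G} \<times> U)" by (auto simp: is_matching_def)
  then have "finite {M. is_matching U G M}" using assms(1) by (meson finite_Pow_iff finite_SigmaI finite_lessThan finite_subset)
  then show ?thesis unfolding opt_def using assms(2) by (intro Max_ge) auto
qed

lemma card_I: "card {s::bool list. length s = b} = 2 ^ b"
  using card_lists_length_eq[of "UNIV::bool set" b] by simp

lemma finite_I: "finite {s::bool list. length s = b}"
  using finite_lists_length_eq[of "UNIV::bool set" b] by simp

lemma inst_bound:
  fixes A :: online_alg and adv_of :: "nat set \<Rightarrow> nat set list \<Rightarrow> bool list"
  assumes adv: "\<forall>U G. valid_instance U G \<longrightarrow> length (adv_of U G) = advice_bits (length G)"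
    and n: "n \<ge> 1"
  shows "\<exists>U G. valid_instance U G \<and> length G = n \<and> opt U G > 0 \<and>
     real (alg_value A (adv_of U G) U G) / real (opt U G)
       \<le> (real n + 2 ^ advice_bits n * 2 ^ (2 ^ advice_bits n)) / (2 * real n)"
proof -
  define b where "b = advice_bits n"
  define I where "I = {s::bool list. length s = b}"
  define U where "U = {..<n}"
  define K where "K = card I * 2 ^ card I"
  have K: "K = 2 ^ b * 2 ^ (2 ^ b)" by (simp add: K_def I_def card_I)
  obtain G us where len: "length G = n" "length us = n" and dist: "distinct us"
    and sus: "set us \<subseteq> U" and edge: "\<forall>j<n. us!j \<in> G!j" and GU: "\<forall>Z\<in>set G. Z \<subseteq> U"
    and inv: "\<forall>i\<in>I. 2*card (mt A n i U G) + card ((U - set us) - mt A n i U G) + min (card (U - set us)) K \<le> n + K"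
    using construct[OF finite_I[of b], of n n A] unfolding U_def K_def I_def by auto
  have valid: "valid_instance U G" using GU by (simp add: valid_instance_def U_def)
  have "card (set us) = n" using dist len by (simp add: distinct_card)
  then have "set us = U" using sus by (simp add: U_def card_subset_eq)
  then have N0: "U - set us = {}" by simp
  define i where "i = adv_of U G"
  have iI: "i \<in> I" using adv valid len by (simp add: i_def I_def b_def)
  have av: "alg_value A i U G = card (mt A n i U G)" by (simp add: alg_value_def mt_def len)
  have "2 * alg_value A i U G \<le> n + K" using inv iI N0 av by force
  hence "2 * real (alg_value A i U G) \<le> real n + real K" by (metis of_nat_add of_nat_le_iff of_nat_mult of_nat_numeral)
  hence av2: "real (alg_value A i U G) \<le> (real n + real K) / 2" by (simp add: field_simps)
  define Mo where "Mo = (\<lambda>j. (j, us!j)) ` {..<n}"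
  have "is_matching U G Mo" unfolding is_matching_def Mo_def
  proof (intro conjI)
    show "(\<lambda>j. (j, us!j)) ` {..<n} \<subseteq> {..<length G} \<times> U" using len sus nth_mem by fastforce
    show "\<forall>(j,u)\<in>(\<lambda>j. (j, us!j)) ` {..<n}. u \<in> G ! j" using edge by auto
    show "\<forall>(j,u)\<in>(\<lambda>j. (j, us!j)) ` {..<n}. \<forall>(j',w)\<in>(\<lambda>j. (j, us!j)) ` {..<n}. (j = j') = (u = w)"
      using dist len by (auto simp: nth_eq_iff_index_eq)
  qed
  moreover have "card Mo = n" unfolding Mo_def by (subst card_image) (auto intro: inj_onI)
  ultimately have optn: "opt U G \<ge> n" using opt_ge[of U G Mo] by (simp add: U_def)
  have "real (alg_value A i U G) / real (opt U G) \<le> real (alg_value A i U G) / real n"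
    using optn n by (intro divide_left_mono) auto
  also have "\<dots> \<le> ((real n + real K) / 2) / real n" using av2 n by (intro divide_right_mono) auto
  also have "\<dots> = (real n + real K) / (2 * real n)" by simp
  finally show ?thesis using valid len optn n unfolding i_def
    by (intro exI[of _ U] exI[of _ G]) (auto simp: K b_def)
qed



lemma bits_bound:
  fixes n :: nat assumes n: "n \<ge> 16"
  shows "real (2 ^ advice_bits n) \<le> log 2 (real n) / 2"
    and "real ((2::nat) ^ (2 ^ advice_bits n)) \<le> sqrt (real n)"
proof -
  define L where "L = log 2 (real n)"
  have np: "real n > 0" using n by simp
  have "(4 \<le> L) \<longleftrightarrow> 2 powr 4 \<le> real n" unfolding L_def by (rule le_log_iff) (use np in auto)
  moreover have "(2::real) powr 4 = 16" by (simp add: powr_numeral)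
  ultimately have L4: "L \<ge> 4" using n by simp
  define ll where "ll = log 2 L"
  have "(2 \<le> ll) \<longleftrightarrow> 2 powr 2 \<le> L" unfolding ll_def by (rule le_log_iff) (use L4 in auto)
  moreover have "(2::real) powr 2 = 4" by (simp add: powr_numeral)
  ultimately have ll2: "ll \<ge> 2" using L4 by simp
  define lll where "lll = log 2 ll"
  have "(1 \<le> lll) \<longleftrightarrow> 2 powr 1 \<le> ll" unfolding lll_def by (rule le_log_iff) (use ll2 in auto)
  then have lll1: "lll \<ge> 1" using ll2 by simp
  define b where "b = advice_bits n"
  have bdef: "b = nat \<lfloor>ll - lll\<rfloor>" by (simp add: b_def advice_bits_def ll_def lll_def L_def)
  have rb: "real b \<le> ll - 1"
  proof (cases "\<lfloor>ll - lll\<rfloor> \<ge> 0")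
    case True
    then have "real b = real_of_int \<lfloor>ll - lll\<rfloor>" by (simp add: bdef)
    also have "\<dots> \<le> ll - lll" by simp
    finally show ?thesis using lll1 by simp
  next
    case False
    then show ?thesis using ll2 by (simp add: bdef)
  qed
  have "real (2 ^ b) = 2 powr real b" by (simp add: powr_realpow)
  also have "\<dots> \<le> 2 powr (ll - 1)" using rb by (intro powr_mono) auto
  also have "\<dots> = 2 powr ll / 2" by (simp add: powr_diff)
  also have "\<dots> = L / 2" unfolding ll_def using L4 by simp
  finally have k: "real (2 ^ b) \<le> L / 2" .
  then show "real (2 ^ advice_bits n) \<le> log 2 (real n) / 2" by (simp add: b_def L_def)
  have "real ((2::nat) ^ (2 ^ b)) = 2 powr real (2 ^ b)"
    by (metis of_nat_numeral of_nat_power powr_realpow zero_less_numeral)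
  also have "\<dots> \<le> 2 powr (L / 2)" using k by (intro powr_mono) auto
  also have "\<dots> = (2 powr L) powr (1/2)" by (simp add: powr_powr)
  also have "\<dots> = sqrt (real n)" unfolding L_def using np by (simp add: powr_half_sqrt)
  finally show "real ((2::nat) ^ (2 ^ advice_bits n)) \<le> sqrt (real n)" by (simp add: b_def)
qed

lemma K_lim: "(\<lambda>n::nat. real (2 ^ advice_bits n * 2 ^ (2 ^ advice_bits n)) / (2 * real n)) \<longlonglongrightarrow> 0"
proof (rule real_tendsto_sandwich[of "\<lambda>_. 0" _ _ "\<lambda>n. (log 2 (real n) / 2) * sqrt (real n) / (2 * real n)"])
  show "\<forall>\<^sub>F n in sequentially. 0 \<le> real (2 ^ advice_bits n * 2 ^ (2 ^ advice_bits n)) / (2 * real n)" by simp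
  show "\<forall>\<^sub>F n in sequentially. real (2 ^ advice_bits n * 2 ^ (2 ^ advice_bits n)) / (2 * real n)
          \<le> (log 2 (real n) / 2) * sqrt (real n) / (2 * real n)"
  proof (rule eventually_sequentiallyI[of 16])
    fix n :: nat assume n: "n \<ge> 16"
    have "real (2 ^ advice_bits n * 2 ^ (2 ^ advice_bits n)) = real (2 ^ advice_bits n) * real ((2::nat) ^ (2 ^ advice_bits n))"
      by simp
    also have "\<dots> \<le> (log 2 (real n) / 2) * sqrt (real n)"
      using bits_bound[OF n] order_trans[OF of_nat_0_le_iff bits_bound(1)[OF n]] by (intro mult_mono) auto
    finally show "real (2 ^ advice_bits n * 2 ^ (2 ^ advice_bits n)) / (2 * real n)
          \<le> (log 2 (real n) / 2) * sqrt (real n) / (2 * real n)"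
      using n by (intro divide_right_mono) auto
  qed
  show "(\<lambda>_. 0) \<longlonglongrightarrow> (0::real)" by simp
  show "(\<lambda>n. (log 2 (real n) / 2) * sqrt (real n) / (2 * real n)) \<longlonglongrightarrow> 0" by real_asymp
qed



theorem corollary2:
  fixes A :: online_alg
    and adv_of :: "nat set \<Rightarrow> nat set list \<Rightarrow> bool list"
  assumes "\<forall>U G. valid_instance U G \<longrightarrow> length (adv_of U G) = advice_bits (length G)"
  shows "asymp_ratio A adv_of \<le> 1/2"
proof -
  define K where "K = (\<lambda>n::nat. real (2 ^ advice_bits n * 2 ^ (2 ^ advice_bits n)))"
  define h where "h = (\<lambda>n::nat. 1/2 + K n / (2 * real n))"
  let ?F = "\<lambda>n. INF I \<in> {(U, G). valid_instance U G \<and> length G = n \<and> opt U G > 0}.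
        ereal (real (alg_value A (adv_of (fst I) (snd I)) (fst I) (snd I)) / real (opt (fst I) (snd I)))"
  have ev: "\<forall>\<^sub>F n in sequentially. ?F n \<le> ereal (h n)"
  proof (rule eventually_sequentiallyI[of 1])
    fix n :: nat assume n: "n \<ge> 1"
    obtain U G where UG: "valid_instance U G" "length G = n" "opt U G > 0"
      and r: "real (alg_value A (adv_of U G) U G) / real (opt U G)
       \<le> (real n + 2 ^ advice_bits n * 2 ^ (2 ^ advice_bits n)) / (2 * real n)"
      using inst_bound[OF assms n, of A] by blast
    have "?F n \<le> ereal (real (alg_value A (adv_of U G) U G) / real (opt U G))"
      by (rule INF_lower2[of "(U,G)"]) (use UG in auto)
    also have "\<dots> \<le> ereal (h n)"
    proof -
      have "(real n + 2 ^ advice_bits n * 2 ^ (2 ^ advice_bits n)) / (2 * real n) = h n"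
        using n by (simp add: h_def K_def field_simps)
      then show ?thesis using r by simp
    qed
    finally show "?F n \<le> ereal (h n)" .
  qed
  have "(\<lambda>n. ereal (h n)) \<longlonglongrightarrow> ereal (1/2 + 0)"
    unfolding h_def K_def by (intro tendsto_ereal tendsto_add tendsto_const K_lim)
  then have "liminf (\<lambda>n. ereal (h n)) = ereal (1/2)" by (intro lim_imp_Liminf) auto
  moreover have "liminf ?F \<le> liminf (\<lambda>n. ereal (h n))" by (rule Liminf_mono[OF ev])
  moreover have e: "(1/2::ereal) = ereal (1/2)"
    by (simp add: one_ereal_def)
  ultimately show ?thesis unfolding asymp_ratio_def e by simp
qed

end
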